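(* Let $\mu=\prod_{n=1}^\infty\nu_n$ be a $b$-biased probability measure on $[0,1]^{\mathbb{N}}$ with $b>0$. Then $\mu(\mathcal{C}_I)=1$; that is, for $\mu$-almost every sequence $(p_i)_{i=1}^\infty$ the Condorcet Jury Property holds.
   Context: For a sequence $(p_i)_{i=1}^\infty\in[0,1]^{\mathbb{N}}$ let $X_1,X_2,\dots$ be independent random variables with values in $\{0,1\}$ and $\mathbb{P}(X_i=1)=p_i$. The sequence satisfies the Condorcet Jury Property (CJP) if $\lim_{n\to\infty,\ n\text{ odd}}\mathbb{P}\left(\sum_{i=1}^n X_i>\frac n2\right)=1$; $\mathcal{C}_I$ is the set of such sequences. All measures are Borel probability measures; $\nu\ll\nu'$ denotes absolute continuity. Hellinger integral: $H(\nu,\nu')=\int_{[0,1]}\sqrt{\frac{d\nu}{d\tau}\frac{d\nu'}{d\tau}}\,d\tau$ for any $\tau$ with $\nu,\nu'\ll\tau$. Class $\mathcal{D}$: a divergence ($d\ge0$, $d(\nu,\nu')=0$ iff $\nu=\nu'$) or distance (metric) $d$ on probability measures on $[0,1]$ belongs to $\mathcal{D}$ if there is $C>0$ with $1-H(\nu,\nu')\le C\,d(\nu,\nu')$ for all $\nu,\nu'$. $b$-biased measure ($b\in[-\frac12,\frac12]$): a product measure $\mu=\prod_{n=1}^\infty\nu_n$ on $[0,1]^{\mathbb{N}}$ such that there is a probability measure $\nu_0$ on $[0,1]$ with $\nu_n\ll\nu_0$ for all $n\ge1$, $\int_{[0,1]}x\,d\nu_0(x)=\frac12+b$, and $\sum_{n=1}^\infty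 d(\nu_n,\nu_0)<\infty$ for some $d\in\mathcal{D}$. *)

theory Defs
  imports "HOL-Probability.Probability"
begin

definition pm01 :: "real measure \<Rightarrow> bool" where
  "pm01 \<nu> \<longleftrightarrow> prob_space \<nu> \<and> sets \<nu> = sets (restrict_space borel {0..1::real})"

definition sum_meas :: "real measure \<Rightarrow> real measure \<Rightarrow> real measure" where
  "sum_meas \<nu> \<nu>' = measure_of (space \<nu>) (sets \<nu>) (\<lambda>A. emeasure \<nu> A + emeasure \<nu>' A)"

definition hellinger :: "real measure \<Rightarrow> real measure \<Rightarrow> ennreal" where
  "hellinger \<nu> \<nu>' =
     (let \<tau> = sum_meas \<nu> \<nu>' in
      \<integral>\<^sup>+ x. ennreal (sqrt (enn2real (RN_deriv \<tau> \<nu> x) * enn2real (RN_deriv \<tau> \<nu>' x))) \<partial>\<tau>)"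

definition class_D :: "(real measure \<Rightarrow> real measure \<Rightarrow> ennreal) \<Rightarrow> bool" where
  "class_D d \<longleftrightarrow>
     (\<forall>\<nu> \<nu>'. pm01 \<nu> \<longrightarrow> pm01 \<nu>' \<longrightarrow> (d \<nu> \<nu>' = 0 \<longleftrightarrow> \<nu> = \<nu>')) \<and>
     (\<exists>C::real. C > 0 \<and> (\<forall>\<nu> \<nu>'. pm01 \<nu> \<longrightarrow> pm01 \<nu>' \<longrightarrow>
         1 - hellinger \<nu> \<nu>' \<le> ennreal C * d \<nu> \<nu>'))"

text \<open>b-biased product measure PiM UNIV nu (coordinates indexed by nat, starting at 0).\<close>
definition b_biased :: "(nat \<Rightarrow> real measure) \<Rightarrow> real \<Rightarrow> bool" where
  "b_biased \<nu> b \<longleftrightarrow> b \<in> {-1/2..1/2} \<and> (\<forall>n. pm01 (\<nu> n)) \<and>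
     (\<exists>\<nu>0 d. pm01 \<nu>0 \<and> (\<forall>n. absolutely_continuous \<nu>0 (\<nu> n)) \<and>
        (\<integral>x. x \<partial>\<nu>0) = 1/2 + b \<and> class_D d \<and> (\<Sum>n. d (\<nu> n) \<nu>0) < \<infinity>)"

text \<open>P(sum_{i<n} X_i > n/2) for independent Bernoulli(p i) variables.\<close>
definition maj_prob :: "(nat \<Rightarrow> real) \<Rightarrow> nat \<Rightarrow> real" where
  "maj_prob p n = (\<Sum>S\<in>{S. S \<subseteq> {..<n} \<and> 2 * card S > n}.
       (\<Prod>i\<in>S. p i) * (\<Prod>i\<in>{..<n} - S. 1 - p i))"

definition CJP :: "(nat \<Rightarrow> real) \<Rightarrow> bool" where
  "CJP p \<longleftrightarrow> (\<lambda>k. maj_prob p (2 * k + 1)) \<longlonglongrightarrow> 1"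

definition C_I :: "(nat \<Rightarrow> real) set" where
  "C_I = {p \<in> (\<Pi>\<^sub>E i\<in>UNIV. {0..1}). CJP p}"

end

theory Submission
  imports Defs
begin

lemma sum_pow_T:
  fixes p :: "nat \<Rightarrow> real"
  assumes "finite A"
  shows "(\<Sum>S\<in>Pow A. (\<Prod>i\<in>S. p i) * (\<Prod>i\<in>A - S. 1 - p i)) = 1"
  using prod_add[OF assms, of p "\<lambda>i. 1 - p i"] by simp

lemma maj_split:
  fixes p :: "nat \<Rightarrow> real"
  shows "maj_prob p n + (\<Sum>S\<in>{S\<in>Pow {..<n}. \<not> 2 * card S > n}. (\<Prod>i\<in>S. p i) * (\<Prod>i\<in>{..<n} - S. 1 - p i)) = 1"
proof -
  let ?T = "\<lambda>S. (\<Prod>i\<in>S. p i) * (\<Prod>i\<in>{..<n} - S. 1 - p i)"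
  have eq: "Pow {..<n} = {S. S \<subseteq> {..<n} \<and> 2 * card S > n} \<union> {S\<in>Pow {..<n}. \<not> 2 * card S > n}"
    by auto
  have "sum ?T ({S. S \<subseteq> {..<n} \<and> 2 * card S > n} \<union> {S\<in>Pow {..<n}. \<not> 2 * card S > n}) =
     sum ?T {S. S \<subseteq> {..<n} \<and> 2 * card S > n} + sum ?T {S\<in>Pow {..<n}. \<not> 2 * card S > n}"
    by (rule sum.union_disjoint) auto
  then have "sum ?T (Pow {..<n}) = maj_prob p n + sum ?T {S\<in>Pow {..<n}. \<not> 2 * card S > n}"
    by (simp only: eq[symmetric] maj_prob_def)
  then show ?thesis using sum_pow_T[of "{..<n}" p] by simp
qed

lemma T_nonneg:
  fixes p :: "nat \<Rightarrow> real"
  assumes "\<forall>i. p i \<in> {0..1}"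
  shows "0 \<le> (\<Prod>i\<in>S. p i) * (\<Prod>i\<in>A - S. 1 - p i)"
  using assms by (intro mult_nonneg_nonneg prod_nonneg) auto

lemma rest_bound:
  fixes p :: "nat \<Rightarrow> real"
  assumes p: "\<forall>i. p i \<in> {0..1}" and y: "0 < y" "y \<le> 1"
  shows "(\<Sum>S\<in>{S\<in>Pow {..<2*k+1}. \<not> 2 * card S > 2*k+1}. (\<Prod>i\<in>S. p i) * (\<Prod>i\<in>{..<2*k+1} - S. 1 - p i))
      \<le> (1/y)^k * (\<Prod>i<2*k+1. y * p i + (1 - p i))"
proof -
  let ?n = "2*k+1"
  let ?T = "\<lambda>S. (\<Prod>i\<in>S. p i) * (\<Prod>i\<in>{..<?n} - S. 1 - p i)"
  let ?U = "\<lambda>S. (\<Prod>i\<in>S. y * p i) * (\<Prod>i\<in>{..<?n} - S. 1 - p i)"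
  have "?T S \<le> (1/y)^k * ?U S" if "S \<in> {S\<in>Pow {..<?n}. \<not> 2 * card S > ?n}" for S
  proof -
    have cS: "card S \<le> k" using that by auto
    have U: "?U S = y ^ card S * ?T S" by (simp only: prod.distrib prod_constant mult.assoc)
    have "1 \<le> (1/y)^k * y ^ card S"
    proof -
      have "(1/y)^k * y ^ card S = (1/y)^(k - card S)"
        using cS y by (simp add: power_diff field_simps power_divide)
      also have "\<dots> \<ge> 1" using y by (simp add: one_le_power)
      finally show ?thesis by simp
    qed
    then have "1 * ?T S \<le> ((1/y)^k * y ^ card S) * ?T S"
      by (intro mult_right_mono T_nonneg[OF p])
    then show ?thesis using U by (simp only: mult.assoc mult_1_left)
  qed
  then have "(\<Sum>S\<in>{S\<in>Pow {..<?n}. \<not> 2 * card S > ?n}. ?T S) \<le> (\<Sum>S\<in>{S\<in>Pow {..<?n}. \<not> 2 * card S > ?n}. (1/y)^k * ?U S)"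
    by (intro sum_mono) auto
  also have "\<dots> \<le> (\<Sum>S\<in>Pow {..<?n}. (1/y)^k * ?U S)"
    using p y by (intro sum_mono2 mult_nonneg_nonneg prod_nonneg) auto
  also have "\<dots> = (1/y)^k * (\<Prod>i<?n. y * p i + (1 - p i))"
    by (subst prod_add) (simp_all add: sum_distrib_left)
  finally show ?thesis .
qed

lemma prod_exp_bound:
  fixes t :: "nat \<Rightarrow> real"
  assumes "\<And>i. i \<in> A \<Longrightarrow> 0 \<le> t i \<and> t i \<le> 1" and fin: "finite A"
  shows "(\<Prod>i\<in>A. 1 - t i) \<le> exp (- (\<Sum>i\<in>A. t i))"
proof -
  have "(\<Prod>i\<in>A. 1 - t i) \<le> (\<Prod>i\<in>A. exp (- t i))"
    using assms by (intro prod_mono) (auto simp: exp_ge_add_one_self[of "- t _", simplified])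
  also have "\<dots> = exp (- (\<Sum>i\<in>A. t i))"
    by (simp only: sum_negf[symmetric] exp_sum[OF fin])
  finally show ?thesis .
qed

lemma rest_nonneg:
  fixes p :: "nat \<Rightarrow> real"
  assumes p: "\<forall>i. p i \<in> {0..1}"
  shows "0 \<le> (\<Sum>S\<in>{S\<in>Pow {..<n}. \<not> 2 * card S > n}. (\<Prod>i\<in>S. p i) * (\<Prod>i\<in>{..<n} - S. 1 - p i))"
  by (intro sum_nonneg T_nonneg[OF p])

lemma cjp_of_avg:
  fixes p :: "nat \<Rightarrow> real" and \<delta> :: real
  assumes p: "\<forall>i. p i \<in> {0..1}" and d: "\<delta> > 0"
    and ev: "eventually (\<lambda>n. (1/2+\<delta>) * real n \<le> (\<Sum>i<n. p i)) sequentially"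
  shows "CJP p"
proof -
  define y where "y = 1/(1+\<delta>)"
  define c where "c = \<delta>*(1+2*\<delta>)/(1+\<delta>)"
  define q where "q = (1+\<delta>) * exp (- c)"
  have y: "0<y" "y \<le> 1" using d by (auto simp: y_def)
  have q0: "0 \<le> q" using d by (simp add: q_def)
  have "q \<le> exp \<delta> * exp (- c)"
    unfolding q_def by (intro mult_right_mono) (auto simp: exp_ge_add_one_self add.commute)
  also have "\<dots> = exp (\<delta> - c)" by (simp add: exp_diff exp_minus field_simps)
  also have "\<dots> < 1"
  proof -
    have "\<delta> - c = - (\<delta>^2/(1+\<delta>))" using d by (simp add: c_def field_simps power2_eq_square)
    also have "\<dots> < 0" using d by simp
    finally show ?thesis by simp
  qed
  finally have q1: "q < 1" .
  obtain N where N: "\<And>n. n \<ge> N \<Longrightarrow> (1/2+\<delta>) * real n \<le> (\<Sum>i<n. p i)"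
    using ev by (auto simp: eventually_sequentially)
  have low: "1 - q^k \<le> maj_prob p (2*k+1)" if k: "k \<ge> N" for k
  proof -
    let ?n = "2*k+1"
    have sp: "(1/2+\<delta>) * real ?n \<le> (\<Sum>i<?n. p i)" using N[of ?n] k by linarith
    have "(1/2+\<delta>) * real ?n \<ge> (1+2*\<delta>) * k" using d by (simp add: field_simps)
    with sp have sp2: "(1+2*\<delta>) * k \<le> (\<Sum>i<?n. p i)" by linarith
    have "(\<Prod>i<?n. y * p i + (1 - p i)) = (\<Prod>i<?n. 1 - (1-y) * p i)"
      by (simp add: algebra_simps)
    also have "\<dots> \<le> exp (- (\<Sum>i<?n. (1-y) * p i))"
      using p y by (intro prod_exp_bound) (auto simp: mult_le_one)
    also have "\<dots> = exp (- ((1-y) * (\<Sum>i<?n. p i)))" by (simp only: sum_distrib_left)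
    also have "\<dots> \<le> exp (- ((1-y) * ((1+2*\<delta>) * k)))"
      using sp2 y by (intro iffD2[OF exp_le_cancel_iff]) (auto intro: mult_left_mono)
    also have "\<dots> = exp (- c) ^ k"
      using d by (simp add: y_def c_def exp_of_nat_mult[symmetric] field_simps)
    finally have P: "(\<Prod>i<?n. y * p i + (1 - p i)) \<le> exp (- c) ^ k" .
    have "(1/y)^k = (1+\<delta>)^k" by (simp add: y_def)
    have "(\<Sum>S\<in>{S\<in>Pow {..<?n}. \<not> 2 * card S > ?n}. (\<Prod>i\<in>S. p i) * (\<Prod>i\<in>{..<?n} - S. 1 - p i))
       \<le> (1/y)^k * (\<Prod>i<?n. y * p i + (1 - p i))" by (rule rest_bound[OF p y])
    also have "\<dots> \<le> (1+\<delta>)^k * exp (- c) ^ k"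
      using P d by (simp add: y_def mult_left_mono)
    also have "\<dots> = q^k" by (simp add: q_def power_mult_distrib)
    finally show ?thesis using maj_split[of p ?n] by linarith
  qed
  have up: "maj_prob p (2*k+1) \<le> 1" for k
    using maj_split[of p "2*k+1"] rest_nonneg[OF p, of "2*k+1"] by linarith
  have "(\<lambda>k. 1 - q^k) \<longlonglongrightarrow> 1 - 0"
    by (intro tendsto_diff tendsto_const LIMSEQ_power_zero) (use q0 q1 in auto)
  then have "(\<lambda>k. 1 - q^k) \<longlonglongrightarrow> 1" by simp
  then show ?thesis unfolding CJP_def
    by (rule tendsto_sandwich[rotated 2, OF _ tendsto_const])
       (use low up in \<open>auto simp: eventually_sequentially\<close>)
qed

lemma core_ineq:
  fixes u v e :: real
  assumes u: "u \<ge> 0" and v: "v \<ge> 0" and e: "e > 0"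
  shows "\<bar>u\<^sup>2 - v\<^sup>2\<bar> \<le> e * (u\<^sup>2 + v\<^sup>2) + (2/e) * (u - v)\<^sup>2"
proof (cases "\<bar>u\<^sup>2 - v\<^sup>2\<bar> \<le> e * (u\<^sup>2 + v\<^sup>2)")
  case True
  have "0 \<le> (2/e) * (u - v)\<^sup>2" using e by simp
  then show ?thesis using True by linarith
next
  case False
  have fac: "\<bar>u\<^sup>2 - v\<^sup>2\<bar> = \<bar>u - v\<bar> * (u + v)"
  proof -
    have "u\<^sup>2 - v\<^sup>2 = (u - v) * (u + v)" by (simp add: power2_eq_square algebra_simps)
    then show ?thesis using u v by (simp add: abs_mult)
  qed
  have sq: "(u+v)\<^sup>2 \<le> 2 * (u\<^sup>2 + v\<^sup>2)"
  proof -
    have "2*(u\<^sup>2+v\<^sup>2) - (u+v)\<^sup>2 = (u-v)\<^sup>2" by (simp add: power2_eq_square algebra_simps)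
    moreover have "(u-v)\<^sup>2 \<ge> 0" by simp
    ultimately show ?thesis by linarith
  qed
  have lt: "e * (u\<^sup>2 + v\<^sup>2) < \<bar>u - v\<bar> * (u + v)" using False fac by linarith
  have uv: "u + v > 0"
  proof (rule ccontr)
    assume "\<not> u + v > 0"
    then have "u = 0" "v = 0" using u v by auto
    then show False using lt by simp
  qed
  have "e * (u+v) * (u+v) \<le> 2 * (e * (u\<^sup>2 + v\<^sup>2))"
    using sq e by (simp add: power2_eq_square mult.assoc mult_left_mono)
  also have "\<dots> < 2 * (\<bar>u - v\<bar> * (u + v))" using lt by simp
  finally have "e * (u+v) * (u+v) < (2 * \<bar>u - v\<bar>) * (u + v)" by (simp add: mult.assoc)
  then have k: "e * (u+v) < 2 * \<bar>u - v\<bar>" using uv by (simp add: mult_less_cancel_right)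
  have "\<bar>u - v\<bar> * (u + v) = (\<bar>u - v\<bar> / e) * (e * (u+v))" using e by simp
  also have "\<dots> \<le> (\<bar>u - v\<bar> / e) * (2 * \<bar>u - v\<bar>)"
    using k e by (intro mult_left_mono) auto
  also have "\<dots> = (2/e) * (\<bar>u - v\<bar> * \<bar>u - v\<bar>)" by simp
  also have "\<dots> = (2/e) * (u - v)\<^sup>2" by (simp only: abs_mult_self_eq power2_eq_square)
  finally have "\<bar>u\<^sup>2 - v\<^sup>2\<bar> \<le> (2/e) * (u - v)\<^sup>2" using fac by simp
  moreover have "0 \<le> e * (u\<^sup>2 + v\<^sup>2)" using e by simp
  ultimately show ?thesis by linarith
qed

lemma pw_ineq:
  fixes f g x e :: real
  assumes f: "f \<ge> 0" and g: "g \<ge> 0" and x: "0 \<le> x" "x \<le> 1" and e: "e > 0"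
  shows "g * x + 4/e * sqrt (f * g) \<le> f * x + (e + 2/e) * (f + g)"
proof -
  define u where "u = sqrt f"
  define v where "v = sqrt g"
  have uv: "u \<ge> 0" "v \<ge> 0" "f = u\<^sup>2" "g = v\<^sup>2" "sqrt (f*g) = u * v"
    using f g by (auto simp: u_def v_def real_sqrt_mult)
  have c: "\<bar>f - g\<bar> \<le> e * (f + g) + (2/e) * (f + g - 2 * sqrt (f*g))"
    using core_ineq[OF uv(1,2) e] uv by (simp add: power2_diff algebra_simps)
  have "g * x \<le> f * x + \<bar>f - g\<bar> * x" by (smt (verit, best) abs_ge_self mult_right_mono x(1) left_diff_distrib)
  also have "\<bar>f - g\<bar> * x \<le> \<bar>f - g\<bar>" using x by (simp add: mult_left_le)
  finally have "g * x \<le> f * x + \<bar>f - g\<bar>" by simp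
  then show ?thesis using c e by (simp add: algebra_simps)
qed

lemma pm01_space: "pm01 \<nu> \<Longrightarrow> space \<nu> = {0..1}"
proof -
  assume "pm01 \<nu>"
  then have "space \<nu> = space (restrict_space borel {0..1::real})"
    unfolding pm01_def by (intro sets_eq_imp_space_eq) simp
  then show ?thesis by (simp add: space_restrict_space)
qed

lemma sum_meas_emeasure:
  assumes "sets \<nu>' = sets \<nu>" and A: "A \<in> sets \<nu>"
  shows "emeasure (sum_meas \<nu> \<nu>') A = emeasure \<nu> A + emeasure \<nu>' A"
  unfolding sum_meas_def
proof (rule emeasure_measure_of_sigma)
  show "sigma_algebra (space \<nu>) (sets \<nu>)" ..
  show "positive (sets \<nu>) (\<lambda>A. emeasure \<nu> A + emeasure \<nu>' A)" by (simp add: positive_def)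
  show "countably_additive (sets \<nu>) (\<lambda>A. emeasure \<nu> A + emeasure \<nu>' A)"
  proof (rule countably_additiveI)
    fix A :: "nat \<Rightarrow> _"  assume *: "range A \<subseteq> sets \<nu>" "disjoint_family A"
    then have **: "range A \<subseteq> sets \<nu>'" using assms by simp
    have "(\<Sum>i. emeasure \<nu> (A i) + emeasure \<nu>' (A i)) = (\<Sum>i. emeasure \<nu> (A i)) + (\<Sum>i. emeasure \<nu>' (A i))"
      by (rule suminf_add[symmetric]) auto
    also have "\<dots> = emeasure \<nu> (\<Union>i. A i) + emeasure \<nu>' (\<Union>i. A i)"
      using * ** by (simp add: suminf_emeasure)
    finally show "(\<Sum>i. emeasure \<nu> (A i) + emeasure \<nu>' (A i)) = emeasure \<nu> (\<Union>i. A i) + emeasure \<nu>' (\<Union>i. A i)" .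
  qed
qed fact

lemma enn_aux1:
  fixes a c d :: real
  shows "0 \<le> a \<Longrightarrow> 0 \<le> c \<Longrightarrow> 0 \<le> d \<Longrightarrow> ennreal (a + c*d) = ennreal a + ennreal c * ennreal d"
  by (simp add: ennreal_plus ennreal_mult)

lemma enn_aux2:
  fixes a c d1 d2 :: real
  shows "0 \<le> a \<Longrightarrow> 0 \<le> c \<Longrightarrow> 0 \<le> d1 \<Longrightarrow> 0 \<le> d2 \<Longrightarrow> ennreal (a + c*(d1+d2)) = ennreal a + ennreal c * (ennreal d1 + ennreal d2)"
  by (simp add: ennreal_plus ennreal_mult)

lemma hellinger_mean:
  fixes e :: real
  assumes pm: "pm01 \<nu>" "pm01 \<nu>'" and e: "e > 0"
  shows "hellinger \<nu> \<nu>' < \<infinity> \<and>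
    (\<integral>x. x \<partial>\<nu>') + (4/e) * enn2real (hellinger \<nu> \<nu>') \<le> (\<integral>x. x \<partial>\<nu>) + 2*e + 4/e"
proof -
  define \<tau> where "\<tau> = sum_meas \<nu> \<nu>'"
  interpret P: prob_space \<nu> using pm by (simp add: pm01_def)
  interpret P': prob_space \<nu>' using pm by (simp add: pm01_def)
  have sets': "sets \<nu>' = sets \<nu>" using pm by (simp add: pm01_def)
  have space': "space \<nu>' = space \<nu>" using pm by (simp add: pm01_space)
  have spc: "space \<nu> = {0..1}" using pm by (simp add: pm01_space)
  have sets\<tau>: "sets \<tau> = sets \<nu>" by (simp add: \<tau>_def sum_meas_def)
  have sets\<tau>b: "sets \<tau> = sets (restrict_space borel {0..1::real})" using sets\<tau> pm by (simp add: pm01_def)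
  have [measurable]: "(\<lambda>x::real. ennreal x) \<in> borel_measurable \<tau>"
    by (subst measurable_cong_sets[OF sets\<tau>b refl]) (intro measurable_restrict_space1, simp)
  have space\<tau>: "space \<tau> = space \<nu>" by (simp add: \<tau>_def sum_meas_def)
  have em\<tau>: "emeasure \<tau> A = emeasure \<nu> A + emeasure \<nu>' A" if "A \<in> sets \<nu>" for A
    unfolding \<tau>_def by (rule sum_meas_emeasure[OF sets' that])
  have "emeasure \<tau> (space \<tau>) = 2"
    using em\<tau>[of "space \<nu>"] space' space\<tau> P.emeasure_space_1 P'.emeasure_space_1 by simp
  then interpret T: finite_measure \<tau> by (intro finite_measureI) simp
  have ac: "absolutely_continuous \<tau> \<nu>" "absolutely_continuous \<tau> \<nu>'"
    unfolding absolutely_continuous_def using em\<tau> sets\<tau> sets'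
    by (auto simp: null_sets_def)
  have [measurable]: "(\<lambda>x::real. x) \<in> borel_measurable \<tau>"
    by (subst measurable_cong_sets[OF sets\<tau>b refl]) (intro measurable_restrict_space1, simp)
  define F where "F = RN_deriv \<tau> \<nu>"
  define G where "G = RN_deriv \<tau> \<nu>'"
  define f where "f x = enn2real (F x)" for x
  define g where "g x = enn2real (G x)" for x
  have [measurable]: "F \<in> borel_measurable \<tau>" "G \<in> borel_measurable \<tau>"
    by (simp_all add: F_def G_def)
  have [measurable]: "f \<in> borel_measurable \<tau>" "g \<in> borel_measurable \<tau>"
    unfolding f_def[abs_def] g_def[abs_def] by simp_all
  have AEF: "AE x in \<tau>. F x = ennreal (f x)"
    using T.RN_deriv_finite[OF _ ac(1)] sets\<tau> P.sigma_finite_measure_axioms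
    by (auto simp: F_def f_def less_top)
  have AEG: "AE x in \<tau>. G x = ennreal (g x)"
    using T.RN_deriv_finite[OF _ ac(2)] sets\<tau> sets' P'.sigma_finite_measure_axioms
    by (auto simp: G_def g_def less_top)
  have RNF: "integral\<^sup>N \<nu> h = (\<integral>\<^sup>+x. F x * h x \<partial>\<tau>)" if "h \<in> borel_measurable \<tau>" for h
    unfolding F_def using T.RN_deriv_nn_integral[OF ac(1) _ that] sets\<tau> by simp
  have RNG: "integral\<^sup>N \<nu>' h = (\<integral>\<^sup>+x. G x * h x \<partial>\<tau>)" if "h \<in> borel_measurable \<tau>" for h
    unfolding G_def using T.RN_deriv_nn_integral[OF ac(2) _ that] sets\<tau> sets' by simp
  have I1: "(\<integral>\<^sup>+x. ennreal (f x) \<partial>\<tau>) = 1"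
  proof -
    have "(\<integral>\<^sup>+x. ennreal (f x) \<partial>\<tau>) = (\<integral>\<^sup>+x. F x * 1 \<partial>\<tau>)"
      using AEF by (intro nn_integral_cong_AE) auto
    also have "\<dots> = integral\<^sup>N \<nu> (\<lambda>_. 1)" by (rule RNF[symmetric]) simp
    also have "\<dots> = 1" by (simp add: P.emeasure_space_1)
    finally show ?thesis .
  qed
  have I2: "(\<integral>\<^sup>+x. ennreal (g x) \<partial>\<tau>) = 1"
  proof -
    have "(\<integral>\<^sup>+x. ennreal (g x) \<partial>\<tau>) = (\<integral>\<^sup>+x. G x * 1 \<partial>\<tau>)"
      using AEG by (intro nn_integral_cong_AE) auto
    also have "\<dots> = integral\<^sup>N \<nu>' (\<lambda>_. 1)" by (rule RNG[symmetric]) simp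
    also have "\<dots> = 1" by (simp add: P'.emeasure_space_1)
    finally show ?thesis .
  qed
  have IA: "(\<integral>\<^sup>+x. ennreal (f x * x) \<partial>\<tau>) = (\<integral>\<^sup>+x. ennreal x \<partial>\<nu>)"
  proof -
    have "(\<integral>\<^sup>+x. ennreal (f x * x) \<partial>\<tau>) = (\<integral>\<^sup>+x. F x * ennreal x \<partial>\<tau>)"
    proof (intro nn_integral_cong_AE)
      show "AE x in \<tau>. ennreal (f x * x) = F x * ennreal x"
        using AEF AE_space[of \<tau>]
      proof eventually_elim
        case (elim x)
        then have "x \<ge> 0" using space\<tau> spc by auto
        moreover have "f x \<ge> 0" by (simp add: f_def)
        ultimately
        show ?case using elim(1) by (simp add: ennreal_mult)
      qed
    qed
    also have "\<dots> = (\<integral>\<^sup>+x. ennreal x \<partial>\<nu>)" by (rule RNF[symmetric]) simp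
    finally show ?thesis .
  qed
  have IB: "(\<integral>\<^sup>+x. ennreal (g x * x) \<partial>\<tau>) = (\<integral>\<^sup>+x. ennreal x \<partial>\<nu>')"
  proof -
    have "(\<integral>\<^sup>+x. ennreal (g x * x) \<partial>\<tau>) = (\<integral>\<^sup>+x. G x * ennreal x \<partial>\<tau>)"
    proof (intro nn_integral_cong_AE)
      show "AE x in \<tau>. ennreal (g x * x) = G x * ennreal x"
        using AEG AE_space[of \<tau>]
      proof eventually_elim
        case (elim x)
        then have "x \<ge> 0" using space\<tau> spc by auto
        moreover have "g x \<ge> 0" by (simp add: g_def)
        ultimately
        show ?case using elim(1) by (simp add: ennreal_mult)
      qed
    qed
    also have "\<dots> = (\<integral>\<^sup>+x. ennreal x \<partial>\<nu>')" by (rule RNG[symmetric]) simp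
    finally show ?thesis .
  qed
  have H: "hellinger \<nu> \<nu>' = (\<integral>\<^sup>+x. ennreal (sqrt (f x * g x)) \<partial>\<tau>)"
    by (simp only: hellinger_def Let_def \<tau>_def[symmetric] f_def g_def F_def G_def)
  have sn: "sets \<nu> = sets (restrict_space borel {0..1::real})" using pm by (simp add: pm01_def)
  have sn': "sets \<nu>' = sets (restrict_space borel {0..1::real})" using pm by (simp add: pm01_def)
  have mx: "(\<lambda>x::real. x) \<in> borel_measurable \<nu>"
    by (subst measurable_cong_sets[OF sn refl]) (intro measurable_restrict_space1, simp)
  have mx': "(\<lambda>x::real. x) \<in> borel_measurable \<nu>'"
    by (subst measurable_cong_sets[OF sn' refl]) (intro measurable_restrict_space1, simp)
  have mA: "(\<integral>x. x \<partial>\<nu>) = enn2real (\<integral>\<^sup>+x. ennreal x \<partial>\<nu>)"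
    by (rule integral_eq_nn_integral[OF mx]) (rule AE_I2, simp add: spc)
  have mB: "(\<integral>x. x \<partial>\<nu>') = enn2real (\<integral>\<^sup>+x. ennreal x \<partial>\<nu>')"
    by (rule integral_eq_nn_integral[OF mx']) (rule AE_I2, simp add: spc space')
  have Afin: "(\<integral>\<^sup>+x. ennreal x \<partial>\<nu>) \<le> 1"
  proof -
    have "(\<integral>\<^sup>+x. ennreal x \<partial>\<nu>) \<le> (\<integral>\<^sup>+x. 1 \<partial>\<nu>)"
      by (intro nn_integral_mono) (auto simp: spc)
    then show ?thesis by (simp add: P.emeasure_space_1)
  qed
  have Bnn: "0 \<le> (\<integral>x. x \<partial>\<nu>')" using mB by simp
  have pw: "ennreal (g x * x) + ennreal (4/e) * ennreal (sqrt (f x * g x))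
      \<le> ennreal (f x * x) + ennreal (e + 2/e) * (ennreal (f x) + ennreal (g x))" if "x \<in> space \<tau>" for x
  proof -
    have x: "0 \<le> x" "x \<le> 1" using that space\<tau> spc by auto
    have fg: "f x \<ge> 0" "g x \<ge> 0" by (simp_all add: f_def g_def)
    have "ennreal (g x * x) + ennreal (4/e) * ennreal (sqrt (f x * g x)) = ennreal (g x * x + 4/e * sqrt (f x * g x))"
      using fg x e by (intro enn_aux1[symmetric]) auto
    also have "\<dots> \<le> ennreal (f x * x + (e + 2/e) * (f x + g x))"
      by (intro ennreal_leI pw_ineq fg x e)
    also have "\<dots> = ennreal (f x * x) + ennreal (e + 2/e) * (ennreal (f x) + ennreal (g x))"
      using fg x e by (intro enn_aux2) auto
    finally show ?thesis .
  qed
  have "(\<integral>\<^sup>+x. ennreal x \<partial>\<nu>') + ennreal (4/e) * hellinger \<nu> \<nu>'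
      = (\<integral>\<^sup>+x. ennreal (g x * x) + ennreal (4/e) * ennreal (sqrt (f x * g x)) \<partial>\<tau>)"
    by (simp add: IB[symmetric] H nn_integral_add nn_integral_cmult)
  also have "\<dots> \<le> (\<integral>\<^sup>+x. ennreal (f x * x) + ennreal (e + 2/e) * (ennreal (f x) + ennreal (g x)) \<partial>\<tau>)"
    by (intro nn_integral_mono pw)
  also have "\<dots> = (\<integral>\<^sup>+x. ennreal x \<partial>\<nu>) + ennreal (e + 2/e) * 2"
    by (simp add: IA[symmetric] nn_integral_add nn_integral_cmult I1 I2)
  finally have main: "(\<integral>\<^sup>+x. ennreal x \<partial>\<nu>') + ennreal (4/e) * hellinger \<nu> \<nu>' \<le> (\<integral>\<^sup>+x. ennreal x \<partial>\<nu>) + ennreal (e + 2/e) * 2" .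
  have Alt: "(\<integral>\<^sup>+x. ennreal x \<partial>\<nu>) < top" using le_less_trans[OF Afin ennreal_one_less_top] .
  have rhs_fin: "(\<integral>\<^sup>+x. ennreal x \<partial>\<nu>) + ennreal (e + 2/e) * 2 < top"
  proof -
    have "(\<integral>\<^sup>+x. ennreal x \<partial>\<nu>) < top" using le_less_trans[OF Afin ennreal_one_less_top] .
    then show ?thesis by (simp add: ennreal_mult_less_top)
  qed
  have le1: "ennreal (4/e) * hellinger \<nu> \<nu>' \<le> (\<integral>\<^sup>+x. ennreal x \<partial>\<nu>') + ennreal (4/e) * hellinger \<nu> \<nu>'"
    by (rule add_increasing) auto
  have le2: "(\<integral>\<^sup>+x. ennreal x \<partial>\<nu>') \<le> (\<integral>\<^sup>+x. ennreal x \<partial>\<nu>') + ennreal (4/e) * hellinger \<nu> \<nu>'"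
    by (rule add_increasing2) auto
  have "ennreal (4/e) * hellinger \<nu> \<nu>' < top"
    using le_less_trans[OF le1 le_less_trans[OF main rhs_fin]] .
  then have Hfin: "hellinger \<nu> \<nu>' < top"
    using e by (auto simp: ennreal_mult_less_top)
  have Bfin: "(\<integral>\<^sup>+x. ennreal x \<partial>\<nu>') < top"
    using le_less_trans[OF le2 le_less_trans[OF main rhs_fin]] .
  define h where "h = enn2real (hellinger \<nu> \<nu>')"
  have hH: "hellinger \<nu> \<nu>' = ennreal h" "h \<ge> 0" using Hfin by (auto simp: h_def less_top)
  have aA: "(\<integral>\<^sup>+x. ennreal x \<partial>\<nu>) = ennreal (\<integral>x. x \<partial>\<nu>)"
    unfolding mA using Alt by (simp add: ennreal_enn2real)
  have bB: "(\<integral>\<^sup>+x. ennreal x \<partial>\<nu>') = ennreal (\<integral>x. x \<partial>\<nu>')"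
    unfolding mB using Bfin by (simp add: ennreal_enn2real)
  have Ann: "0 \<le> (\<integral>x. x \<partial>\<nu>)" using mA by simp
  have L: "ennreal ((\<integral>x. x \<partial>\<nu>') + (4/e) * h) = (\<integral>\<^sup>+x. ennreal x \<partial>\<nu>') + ennreal (4/e) * hellinger \<nu> \<nu>'"
    using enn_aux1[OF Bnn _ hH(2), of "4/e"] e by (simp only: bB hH(1)) simp
  have R: "ennreal ((\<integral>x. x \<partial>\<nu>) + (e + 2/e) * 2) = (\<integral>\<^sup>+x. ennreal x \<partial>\<nu>) + ennreal (e + 2/e) * 2"
  proof -
    have "ennreal ((\<integral>x. x \<partial>\<nu>) + (e + 2/e) * 2) = ennreal (\<integral>x. x \<partial>\<nu>) + ennreal ((e + 2/e) * 2)"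
      using Ann e by (intro ennreal_plus) auto
    also have "ennreal ((e + 2/e) * 2) = ennreal (e + 2/e) * ennreal 2"
      using e by (intro ennreal_mult) auto
    finally show ?thesis by (simp only: aA[symmetric]) simp
  qed
  have "(\<integral>x. x \<partial>\<nu>') + 4/e * h \<le> (\<integral>x. x \<partial>\<nu>) + (e + 2/e) * 2"
    using main unfolding L[symmetric] R[symmetric]
    by (subst (asm) ennreal_le_iff) (use Ann e in auto)
  then show ?thesis using Hfin by (simp add: h_def algebra_simps)
qed

lemma pm01_id_meas: "pm01 \<nu> \<Longrightarrow> (\<lambda>x::real. x) \<in> borel_measurable \<nu>"
proof -
  assume "pm01 \<nu>"
  then have sn: "sets \<nu> = sets (restrict_space borel {0..1::real})" by (simp add: pm01_def)
  show ?thesis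
    by (subst measurable_cong_sets[OF sn refl]) (intro measurable_restrict_space1, simp)
qed

lemma coord_meas:
  assumes pm: "\<forall>i. pm01 (\<nu> i)"
  shows "(\<lambda>x. x i) \<in> borel_measurable (PiM UNIV \<nu>)"
  using measurable_compose[OF measurable_component_singleton[of i UNIV \<nu>] pm01_id_meas[OF pm[rule_format, of i]]]
  by simp

lemma prod_hoeffding:
  fixes \<nu> :: "nat \<Rightarrow> real measure"
  assumes pm: "\<forall>i. pm01 (\<nu> i)" and n: "n > 0" and t: "t \<ge> 0"
  shows "measure (PiM UNIV \<nu>) {x \<in> space (PiM UNIV \<nu>). (\<Sum>i<n. x i) \<le> (\<Sum>i<n. \<integral>y. y \<partial>\<nu> i) - n*t}
     \<le> exp (-2 * n * t\<^sup>2)"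
proof -
  let ?M = "PiM UNIV \<nu>"
  interpret P: product_prob_space \<nu> UNIV
    by (intro product_prob_spaceI) (use pm in \<open>simp add: pm01_def\<close>)
  have sp: "space ?M = (\<Pi>\<^sub>E i\<in>UNIV. {0..1})"
    using pm by (simp add: space_PiM pm01_space)
  have rv: "P.random_variable (\<nu> i) (\<lambda>x. x i)" for i
    by (rule measurable_component_singleton) simp
  have "P.indep_vars \<nu> (\<lambda>i x. x i) {..<n}"
  proof (subst P.indep_vars_iff_distr_eq_PiM)
    show "{..<n} \<noteq> {}" using n by auto
    show "P.random_variable (\<nu> i) (\<lambda>x. x i)" for i by (rule rv)
    have "distr ?M (PiM {..<n} \<nu>) (\<lambda>x. \<lambda>i\<in>{..<n}. x i) = PiM {..<n} \<nu>"
      using P.distr_PiM_restrict_finite[of "{..<n}"] by (simp add: restrict_def)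
    also have "\<dots> = (\<Pi>\<^sub>M i\<in>{..<n}. distr ?M (\<nu> i) (\<lambda>x. x i))"
      by (intro PiM_cong refl) (simp add: P.PiM_component)
    finally show "distr ?M (PiM {..<n} \<nu>) (\<lambda>x. \<lambda>i\<in>{..<n}. x i) = (\<Pi>\<^sub>M i\<in>{..<n}. distr ?M (\<nu> i) (\<lambda>x. x i))" .
  qed
  then have ind: "P.indep_vars (\<lambda>_. borel) (\<lambda>i x. x i) {..<n}"
    using P.indep_vars_compose2[of \<nu> "\<lambda>i x. x i" "{..<n}" "\<lambda>_ x. x" "\<lambda>_. borel"] pm01_id_meas pm
    by simp
  have ex: "P.expectation (\<lambda>x. x i) = (\<integral>y. y \<partial>\<nu> i)" for i
  proof -
    have "(\<integral>y. y \<partial>\<nu> i) = (\<integral>y. y \<partial>(distr ?M (\<nu> i) (\<lambda>x. x i)))" by (simp add: P.PiM_component)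
    also have "\<dots> = P.expectation (\<lambda>x. x i)"
      by (rule integral_distr[OF rv]) (rule pm01_id_meas, use pm in simp)
    finally show ?thesis by simp
  qed
  interpret H: Hoeffding_ineq ?M "{..<n}" "\<lambda>i x. x i" "\<lambda>_. 0" "\<lambda>_. 1" "\<Sum>i<n. \<integral>y. y \<partial>\<nu> i"
  proof unfold_locales
    show "finite {..<n}" by simp
    show "P.indep_vars (\<lambda>_. borel) (\<lambda>i x. x i) {..<n}" by (rule ind)
    show "AE x in ?M. x i \<in> {0..1}" for i using sp by (intro AE_I2) auto
    show "(\<Sum>i<n. \<integral>y. y \<partial>\<nu> i) \<equiv> (\<Sum>i<n. P.expectation (\<lambda>x. x i))"
      by (rule eq_reflection) (simp add: ex)
  qed
  have "P.prob {x \<in> space ?M. (\<Sum>i<n. x i) \<le> (\<Sum>i<n. \<integral>y. y \<partial>\<nu> i) - n*t}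
     \<le> exp (-2 * (n*t)\<^sup>2 / (\<Sum>i<n. (1 - 0)\<^sup>2))"
    by (rule H.Hoeffding_ineq_le) (use t n in auto)
  also have "\<dots> = exp (-2 * n * t\<^sup>2)" using n by (simp add: power2_eq_square)
  finally show ?thesis by simp
qed

lemma ae_lower:
  fixes \<nu> :: "nat \<Rightarrow> real measure" and t :: real
  assumes pm: "\<forall>i. pm01 (\<nu> i)" and t: "t > 0"
  shows "AE x in PiM UNIV \<nu>. eventually (\<lambda>n. (\<Sum>i<n. \<integral>y. y \<partial>\<nu> i) - n*t < (\<Sum>i<n. x i)) sequentially"
proof -
  let ?M = "PiM UNIV \<nu>"
  interpret P: product_prob_space \<nu> UNIV
    by (intro product_prob_spaceI) (use pm in \<open>simp add: pm01_def\<close>)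
  define A where "A n = {x \<in> space ?M. (\<Sum>i<n. x i) \<le> (\<Sum>i<n. \<integral>y. y \<partial>\<nu> i) - n*t}" for n
  have cm[measurable]: "(\<lambda>x. x i) \<in> borel_measurable ?M" for i by (rule coord_meas[OF pm])
  have As: "A n \<in> sets ?M" for n unfolding A_def by measurable
  have bnd: "measure ?M (A n) \<le> exp (-2 * t\<^sup>2) ^ n" for n
  proof (cases "n = 0")
    case True
    then show ?thesis by simp
  next
    case False
    then have "measure ?M (A n) \<le> exp (-2 * n * t\<^sup>2)"
      unfolding A_def using prod_hoeffding[OF pm, of n t] False t by simp
    also have "\<dots> = exp (-2 * t\<^sup>2) ^ n" by (simp add: exp_of_nat_mult[symmetric] algebra_simps)
    finally show ?thesis .
  qed
  have q: "exp (-2 * t\<^sup>2) < 1" using t by simp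
  have "summable (\<lambda>n. measure ?M (A n))"
    by (rule summable_comparison_test[OF _ summable_geometric[of "exp (-2 * t\<^sup>2)"]])
       (use bnd q in auto)
  then have "AE x in ?M. eventually (\<lambda>n. x \<in> space ?M - A n) sequentially"
    by (intro borel_cantelli_AE1 As) (auto simp: P.emeasure_finite less_top[symmetric])
  then show ?thesis
    by (rule AE_mp) (auto intro!: AE_I2 elim!: eventually_mono simp: A_def)
qed

theorem theorem2:
  fixes \<nu> :: "nat \<Rightarrow> real measure" and b :: real
  assumes "b_biased \<nu> b" and "b > 0"
  shows "C_I \<in> sets (\<Pi>\<^sub>M i\<in>UNIV. \<nu> i) \<and> emeasure (\<Pi>\<^sub>M i\<in>UNIV. \<nu> i) C_I = 1"
proof -
  let ?M = "PiM UNIV \<nu>"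
  have b: "b > 0" by fact
  from assms(1) have pm: "\<forall>i. pm01 (\<nu> i)" by (simp add: b_biased_def)
  from assms(1) have "\<exists>\<nu>0 d. pm01 \<nu>0 \<and> (\<forall>n. absolutely_continuous \<nu>0 (\<nu> n)) \<and>
        (\<integral>x. x \<partial>\<nu>0) = 1/2 + b \<and> class_D d \<and> (\<Sum>n. d (\<nu> n) \<nu>0) < \<infinity>"
    unfolding b_biased_def by (elim conjE)
  then obtain \<nu>0 d where H: "pm01 \<nu>0 \<and> (\<forall>n. absolutely_continuous \<nu>0 (\<nu> n)) \<and>
        (\<integral>x. x \<partial>\<nu>0) = 1/2 + b \<and> class_D d \<and> (\<Sum>n. d (\<nu> n) \<nu>0) < \<infinity>"
    by (elim exE) (erule that)
  then have pm0: "pm01 \<nu>0" and m0: "(\<integral>x. x \<partial>\<nu>0) = 1/2 + b"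
    and cD: "class_D d" and dsum: "(\<Sum>n. d (\<nu> n) \<nu>0) < \<infinity>" by simp_all
  from cD have "\<exists>C::real. C > 0 \<and> (\<forall>\<mu> \<mu>'. pm01 \<mu> \<longrightarrow> pm01 \<mu>' \<longrightarrow> 1 - hellinger \<mu> \<mu>' \<le> ennreal C * d \<mu> \<mu>')"
    unfolding class_D_def by (elim conjE)
  then obtain C :: real where C: "C > 0" and
    Cd0: "\<forall>\<mu> \<mu>'. pm01 \<mu> \<longrightarrow> pm01 \<mu>' \<longrightarrow> 1 - hellinger \<mu> \<mu>' \<le> ennreal C * d \<mu> \<mu>'"
    by (elim exE conjE)
  have Cd: "1 - hellinger \<mu> \<mu>' \<le> ennreal C * d \<mu> \<mu>'" if "pm01 \<mu>" "pm01 \<mu>'" for \<mu> \<mu>'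
    using Cd0 that by blast
  interpret P: product_prob_space \<nu> UNIV
    by (intro product_prob_spaceI) (use pm in \<open>simp add: pm01_def\<close>)
  have cm[measurable]: "(\<lambda>x. x i) \<in> borel_measurable ?M" for i by (rule coord_meas[OF pm])
  have sp: "space ?M = (\<Pi>\<^sub>E i\<in>UNIV. {0..1})"
    using pm by (simp add: space_PiM pm01_space)
  have CI: "C_I = {x \<in> space ?M. CJP x}" by (simp add: C_I_def sp)
  have CIs: "C_I \<in> sets ?M"
    unfolding CI CJP_def maj_prob_def by measurable
  define r where "r i = enn2real (d (\<nu> i) \<nu>0)" for i
  have dsum': "(\<Sum>n. d (\<nu> n) \<nu>0) < top" using dsum by simp
  have dfin: "d (\<nu> i) \<nu>0 < top" for i
    by (rule ennreal_suminf_lessD[OF dsum'])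
  have dr: "d (\<nu> i) \<nu>0 = ennreal (r i)" for i
    unfolding r_def by (rule ennreal_enn2real[OF dfin, symmetric])
  have r0: "r i \<ge> 0" for i by (simp add: r_def)
  have "(\<Sum>i. ennreal (r i)) = (\<Sum>n. d (\<nu> n) \<nu>0)" by (simp only: dr)
  then have "(\<Sum>i. ennreal (r i)) \<noteq> top" using dsum' by simp
  then have "summable r"
    by (rule summable_suminf_not_top[OF r0])
  define R where "R = suminf r"
  have rR: "(\<Sum>i<n. r i) \<le> R" for n
    unfolding R_def by (rule sum_le_suminf[OF \<open>summable r\<close>]) (use r0 in auto)
  define e where "e = b/8"
  have e: "e > 0" using b by (simp add: e_def)
  define m where "m i = (\<integral>x. x \<partial>\<nu> i)" for i
  have mi: "1/2 + b - 2*e - (4/e) * C * r i \<le> m i" for i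
  proof -
    define h where "h = enn2real (hellinger (\<nu> i) \<nu>0)"
    from hellinger_mean[OF pm[rule_format, of i] pm0 e]
    have Hfin: "hellinger (\<nu> i) \<nu>0 < top" and
      ineq: "(1/2 + b) + (4/e) * h \<le> m i + 2*e + 4/e"
      by (simp_all add: m0 m_def h_def)
    have hH: "hellinger (\<nu> i) \<nu>0 = ennreal h" "h \<ge> 0" using Hfin by (auto simp: h_def ennreal_enn2real)
    have hr: "1 - h \<le> C * r i"
    proof (cases "h \<le> 1")
      case True
      have "ennreal (1 - h) = ennreal 1 - ennreal h"
        by (rule ennreal_minus[symmetric]) (use hH in simp)
      also have "\<dots> = 1 - hellinger (\<nu> i) \<nu>0" using hH by simp
      also have "\<dots> \<le> ennreal C * d (\<nu> i) \<nu>0" by (rule Cd[OF pm[rule_format] pm0])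
      also have "\<dots> = ennreal (C * r i)" using C r0 by (simp add: dr ennreal_mult)
      finally show ?thesis using C r0 by (subst (asm) ennreal_le_iff) auto
    next
      case False
      then show ?thesis using C r0 by (smt (verit) mult_nonneg_nonneg)
    qed
    have "(4/e) * (1 - h) \<le> (4/e) * (C * r i)" using hr e by (intro mult_left_mono) auto
    moreover have "(4/e) * (1 - h) = 4/e - (4/e) * h" by (simp add: right_diff_distrib)
    moreover have "(4/e) * C * r i = (4/e) * (C * r i)" by simp
    ultimately show ?thesis using ineq by linarith
  qed
  define K where "K = (4/e) * C * R"
  have msum: "real n * (1/2 + b - 2*e) - K \<le> (\<Sum>i<n. m i)" for n
  proof -
    have "(\<Sum>i<n. 1/2 + b - 2*e - (4/e) * C * r i) \<le> (\<Sum>i<n. m i)"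
      by (intro sum_mono mi)
    moreover have "(\<Sum>i<n. 1/2 + b - 2*e - (4/e) * C * r i) = real n * (1/2 + b - 2*e) - (4/e) * C * (\<Sum>i<n. r i)"
      by (simp add: sum_subtractf sum_distrib_left)
    moreover have "(4/e) * C * (\<Sum>i<n. r i) \<le> K"
      unfolding K_def using rR[of n] e C by (intro mult_left_mono) auto
    ultimately show ?thesis by linarith
  qed
  obtain N :: nat where N: "K * 4 / b \<le> N" using real_arch_simple by blast
  have key: "(\<forall>\<^sub>F n in sequentially. (\<Sum>i<n. \<integral>y. y \<partial>\<nu> i) - real n * (b/4) < (\<Sum>i<n. x i)) \<longrightarrow> x \<in> C_I"
    if x: "x \<in> space ?M" for x
  proof
    assume ev: "\<forall>\<^sub>F n in sequentially. (\<Sum>i<n. \<integral>y. y \<partial>\<nu> i) - real n * (b/4) < (\<Sum>i<n. x i)"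
    have ev2: "\<forall>\<^sub>F n in sequentially. (1/2 + b/4) * real n \<le> (\<Sum>i<n. x i)"
      using ev eventually_ge_at_top[of N]
    proof eventually_elim
      case (elim n)
      have "real n * (b/4) \<ge> K"
      proof -
        have "K = (K * 4 / b) * (b/4)" using b by simp
        also have "\<dots> \<le> real n * (b/4)" using N elim(2) b by (intro mult_right_mono) auto
        finally show ?thesis .
      qed
      moreover have "(\<Sum>i<n. \<integral>y. y \<partial>\<nu> i) = (\<Sum>i<n. m i)" by (simp add: m_def)
      moreover note msum[of n] elim(1)
      moreover have "real n * (1/2 + b - 2*e) = (1/2 + b/4) * real n + real n * (b/4) + real n * (b/4)"
        by (simp add: e_def algebra_simps)
      ultimately show ?case by linarith
    qed
    have xi: "\<forall>i. x i \<in> {0..1}" using x sp by auto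
    have "b/4 > 0" using b by simp
    from cjp_of_avg[OF xi this ev2] show "x \<in> C_I" unfolding CI using x by simp
  qed
  have "AE x in ?M. x \<in> C_I"
    by (rule AE_mp[OF ae_lower[OF pm, of "b/4"] AE_I2[OF key]]) (use b in simp)
  then have "emeasure ?M C_I = 1" by (rule P.emeasure_eq_1_AE[OF CIs])
  with CIs show ?thesis by simp
qed

end
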